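(* Let $n\ge1$ and let $\mathcal{ORCT}_n$ be the semigroup of all full contractions of $[n]=\{1,\dots,n\}$ that are either order-preserving or order-reversing. Let $\textnormal{Reg}(\mathcal{ORCT}_n)$ be the set of regular elements of $\mathcal{ORCT}_n$. Then $$|\textnormal{Reg}(\mathcal{ORCT}_n)|=\frac{n(n-1)(2n-1)+6n}{3}-n.$$
   Context: $\mathcal{T}_n$ is the semigroup (under composition) of all maps $[n]\to[n]$. A map $\alpha\in\mathcal{T}_n$ is a contraction if $|x\alpha-y\alpha|\le |x-y|$ for all $x,y\in[n]$; it is order-preserving if $x\le y$ implies $x\alpha\le y\alpha$, and order-reversing if $x\le y$ implies $x\alpha\ge y\alpha$. $\mathcal{ORCT}_n$ is the set of contractions in $\mathcal{T}_n$ that are order-preserving or order-reversing; it is a subsemigroup of $\mathcal{T}_n$. An element $\alpha\in\mathcal{ORCT}_n$ is regular if there is $\beta\in\mathcal{ORCT}_n$ with $\alpha\beta\alpha=\alpha$. *)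

theory Defs
  imports Main "HOL-Library.FuncSet"
begin

text \<open>Full transformations of [n] = {1..n}, represented as extensional maps
  (value undefined outside {1..n}).\<close>
definition Tn :: "nat \<Rightarrow> (nat \<Rightarrow> nat) set" where
  "Tn n = {1..n} \<rightarrow>\<^sub>E {1..n}"

definition is_contraction :: "nat \<Rightarrow> (nat \<Rightarrow> nat) \<Rightarrow> bool" where
  "is_contraction n a \<longleftrightarrow> (\<forall>x\<in>{1..n}. \<forall>y\<in>{1..n}.
     \<bar>int (a x) - int (a y)\<bar> \<le> \<bar>int x - int y\<bar>)"

definition order_preserving :: "nat \<Rightarrow> (nat \<Rightarrow> nat) \<Rightarrow> bool" where
  "order_preserving n a \<longleftrightarrow> (\<forall>x\<in>{1..n}. \<forall>y\<in>{1..n}. x \<le> y \<longrightarrow> a x \<le> a y)"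

definition order_reversing :: "nat \<Rightarrow> (nat \<Rightarrow> nat) \<Rightarrow> bool" where
  "order_reversing n a \<longleftrightarrow> (\<forall>x\<in>{1..n}. \<forall>y\<in>{1..n}. x \<le> y \<longrightarrow> a x \<ge> a y)"

definition ORCT :: "nat \<Rightarrow> (nat \<Rightarrow> nat) set" where
  "ORCT n = {a \<in> Tn n. is_contraction n a \<and> (order_preserving n a \<or> order_reversing n a)}"

text \<open>Product in the semigroup: maps act on the right, x(ab) = (xa)b.\<close>
definition tmul :: "nat \<Rightarrow> (nat \<Rightarrow> nat) \<Rightarrow> (nat \<Rightarrow> nat) \<Rightarrow> (nat \<Rightarrow> nat)" where
  "tmul n a b = compose {1..n} b a"

definition Reg_ORCT :: "nat \<Rightarrow> (nat \<Rightarrow> nat) set" where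
  "Reg_ORCT n = {a \<in> ORCT n. \<exists>b \<in> ORCT n. tmul n (tmul n a b) a = a}"

end

theory Submission
  imports Defs
begin

definition gP :: "nat \<Rightarrow> nat \<times> nat \<times> nat \<Rightarrow> (nat \<Rightarrow> nat)" where
  "gP n t = (case t of (j,a,p) \<Rightarrow> restrict (\<lambda>x. max a (min (a+n-j) (x+a-p))) {1..n})"

definition SP :: "nat \<Rightarrow> (nat \<times> nat \<times> nat) set" where
  "SP n = (SIGMA j:{1..n-1}. {1..j} \<times> {1..j})"

definition rv :: "nat \<Rightarrow> (nat \<Rightarrow> nat) \<Rightarrow> (nat \<Rightarrow> nat)" where
  "rv n f = restrict (\<lambda>x. f (n+1-x)) {1..n}"

definition Cn :: "nat \<Rightarrow> (nat \<Rightarrow> nat) set" where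
  "Cn n = (\<lambda>c. restrict (\<lambda>_. c) {1..n}) ` {1..n}"

lemma reg_iff:
  assumes "a \<in> Tn n" "b \<in> Tn n"
  shows "(tmul n (tmul n a b) a = a) \<longleftrightarrow> (\<forall>x\<in>{1..n}. a (b (a x)) = a x)"
proof -
  have ext: "a x = undefined" if "x \<notin> {1..n}" for x
    using assms(1) that unfolding Tn_def by (auto simp: PiE_def extensional_def)
  show ?thesis
    unfolding tmul_def compose_def fun_eq_iff
    using ext by (auto simp: restrict_def)
qed

lemma contr_OP:
  assumes "\<And>x y. x \<in> {1..n} \<Longrightarrow> y \<in> {1..n} \<Longrightarrow> x \<le> y \<Longrightarrow> f x \<le> f y \<and> f y \<le> f x + (y - x)"
  shows "is_contraction n f \<and> order_preserving n f"
proof -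
  have "\<bar>int (f x) - int (f y)\<bar> \<le> \<bar>int x - int y\<bar>" if "x \<in> {1..n}" "y \<in> {1..n}" for x y
  proof (cases "x \<le> y")
    case True then show ?thesis using assms[OF that True] by auto
  next
    case False then show ?thesis using assms[OF that(2,1)] by auto
  qed
  then show ?thesis unfolding is_contraction_def order_preserving_def using assms by auto
qed

lemma contr_OR:
  assumes "\<And>x y. x \<in> {1..n} \<Longrightarrow> y \<in> {1..n} \<Longrightarrow> x \<le> y \<Longrightarrow> f y \<le> f x \<and> f x \<le> f y + (y - x)"
  shows "is_contraction n f \<and> order_reversing n f"
proof -
  have "\<bar>int (f x) - int (f y)\<bar> \<le> \<bar>int x - int y\<bar>" if "x \<in> {1..n}" "y \<in> {1..n}" for x y
  proof (cases "x \<le> y")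
    case True then show ?thesis using assms[OF that True] by auto
  next
    case False then show ?thesis using assms[OF that(2,1)] by auto
  qed
  then show ?thesis unfolding is_contraction_def order_reversing_def using assms by auto
qed

lemma contr_step:
  assumes "is_contraction n f" "x \<in> {1..n}" "y \<in> {1..n}" "x \<le> y"
  shows "f y \<le> f x + (y - x)" "f x \<le> f y + (y - x)"
proof -
  have "\<bar>int (f x) - int (f y)\<bar> \<le> \<bar>int x - int y\<bar>" using assms unfolding is_contraction_def by blast
  then show "f y \<le> f x + (y - x)" "f x \<le> f y + (y - x)" using assms(4) by linarith+
qed

lemma gP_mem:
  assumes "(j,a,p) \<in> SP n"
  shows "gP n (j,a,p) \<in> Reg_ORCT n" "order_preserving n (gP n (j,a,p))"
        "gP n (j,a,p) 1 = a" "gP n (j,a,p) n = a + n - j" "a < a + n - j"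
proof -
  have A: "1 \<le> j" "j \<le> n - 1" "1 \<le> a" "a \<le> j" "1 \<le> p" "p \<le> j"
    using assms unfolding SP_def by auto
  define h where "h = (\<lambda>x. max a (min (a+n-j) (x+a-p)))"
  have g: "gP n (j,a,p) = restrict h {1..n}" unfolding gP_def h_def by simp
  define k where "k = (\<lambda>y. max 1 (min n (y + p - a)))"
  define b where "b = restrict k {1..n}"
  have hT: "restrict h {1..n} \<in> Tn n" unfolding Tn_def h_def using A by auto
  have bT: "b \<in> Tn n" unfolding Tn_def b_def k_def using A by auto
  have hc: "is_contraction n (restrict h {1..n}) \<and> order_preserving n (restrict h {1..n})"
    by (rule contr_OP) (auto simp: h_def)
  have kc: "is_contraction n b \<and> order_preserving n b"
    unfolding b_def by (rule contr_OP) (auto simp: k_def)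
  have "\<forall>x\<in>{1..n}. restrict h {1..n} (b (restrict h {1..n} x)) = restrict h {1..n} x"
  proof
    fix x assume x: "x \<in> {1..n}"
    have hx: "h x \<in> {a..a+n-j}" "h x \<in> {1..n}" using A by (auto simp: h_def)
    have "b (h x) = h x + p - a" using hx A by (auto simp: b_def k_def)
    moreover have "h x + p - a \<in> {1..n}" using hx A by auto
    moreover have "h (h x + p - a) = h x" using hx A by (auto simp: h_def)
    ultimately show "restrict h {1..n} (b (restrict h {1..n} x)) = restrict h {1..n} x"
      using x hx by simp
  qed
  then have "tmul n (tmul n (restrict h {1..n}) b) (restrict h {1..n}) = restrict h {1..n}"
    using reg_iff[OF hT bT] by blast
  then show "gP n (j,a,p) \<in> Reg_ORCT n" "order_preserving n (gP n (j,a,p))"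
    unfolding g Reg_ORCT_def ORCT_def using hT bT hc kc by auto
  show "gP n (j,a,p) 1 = a" "gP n (j,a,p) n = a + n - j" "a < a + n - j"
    unfolding g h_def using A by auto
qed

lemma gP_inj: "inj_on (gP n) (SP n)"
proof (rule inj_onI)
  fix s t assume s: "s \<in> SP n" and t: "t \<in> SP n" and e: "gP n s = gP n t"
  obtain j a p where sj: "s = (j,a,p)" by (cases s) auto
  obtain j' a' p' where tj: "t = (j',a',p')" by (cases t) auto
  have A: "1 \<le> j" "j \<le> n - 1" "1 \<le> a" "a \<le> j" "1 \<le> p" "p \<le> j"
    using s sj unfolding SP_def by auto
  have B: "1 \<le> j'" "j' \<le> n - 1" "1 \<le> a'" "a' \<le> j'" "1 \<le> p'" "p' \<le> j'"
    using t tj unfolding SP_def by auto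
  have aa: "a = a'" using gP_mem(3)[OF s[unfolded sj]] gP_mem(3)[OF t[unfolded tj]] e sj tj by simp
  moreover have "j = j'" using gP_mem(4)[OF s[unfolded sj]] gP_mem(4)[OF t[unfolded tj]] e sj tj A B aa
    by simp
  moreover have "p = p'"
  proof (rule ccontr)
    assume "p \<noteq> p'"
    then consider "p < p'" | "p' < p" by linarith
    then show False
    proof cases
      case 1
      have "gP n s (p+1) = gP n t (p+1)" using e by simp
      then show False using 1 A B \<open>a = a'\<close> \<open>j = j'\<close> unfolding sj tj gP_def by (auto split: if_splits)
    next
      case 2
      have "gP n s (p'+1) = gP n t (p'+1)" using e by simp
      then show False using 2 A B \<open>a = a'\<close> \<open>j = j'\<close> unfolding sj tj gP_def by (auto split: if_splits)
    qed
  qed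
  ultimately show "s = t" using sj tj by simp
qed

lemma key:
  fixes f \<beta> :: "nat \<Rightarrow> nat"
  assumes fr: "\<And>x. x \<in> {1..n} \<Longrightarrow> f x \<in> {1..n}"
    and fm: "\<And>x y. x \<in> {1..n} \<Longrightarrow> y \<in> {1..n} \<Longrightarrow> x \<le> y \<Longrightarrow> f x \<le> f y"
    and fc: "is_contraction n f"
    and br: "\<And>x. x \<in> {1..n} \<Longrightarrow> \<beta> x \<in> {1..n}"
    and bc: "is_contraction n \<beta>"
    and reg: "\<And>x. x \<in> {1..n} \<Longrightarrow> f (\<beta> (f x)) = f x"
    and nc: "f 1 \<noteq> f n" and n1: "1 \<le> n"
  shows "\<exists>j a p. (j,a,p) \<in> SP n \<and> (\<forall>x\<in>{1..n}. f x = gP n (j,a,p) x)"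
proof -
  define a where "a = f 1"
  define b where "b = f n"
  have ab: "a < b" using fm[of 1 n] nc n1 unfolding a_def b_def by fastforce
  have a1: "1 \<le> a" and bn: "b \<le> n" using fr[of 1] fr[of n] n1 unfolding a_def b_def by auto
  have frng: "a \<le> f x \<and> f x \<le> b" if "x \<in> {1..n}" for x
    using fm[of 1 x] fm[of x n] that unfolding a_def b_def by auto
  have step: "f (x+1) \<le> f x + 1" if "1 \<le> x" "x + 1 \<le> n" for x
    using contr_step(1)[OF fc, of x "x+1"] that by auto
  have ivt: "\<exists>z\<in>{1..n}. f z = v" if "a \<le> v" "v \<le> b" for v
  proof (cases "v = b")
    case True then show ?thesis using n1 unfolding b_def by auto
  next
    case False
    define W where "W = {w\<in>{1..n}. f w \<le> v}"
    have W1: "1 \<in> W" using that n1 unfolding W_def a_def by auto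
    have Wf: "finite W" unfolding W_def by auto
    define z where "z = Max W"
    have zW: "z \<in> W" using W1 Wf unfolding z_def by (intro Max_in) auto
    have zz: "z \<le> n" "f z \<le> v" using zW unfolding W_def by auto
    have "z \<noteq> n" using zz False that unfolding b_def by auto
    then have zn: "z < n" using zz by auto
    have "z + 1 \<notin> W"
    proof
      assume "z + 1 \<in> W"
      then have "z + 1 \<le> z" unfolding z_def using Max_ge[OF Wf] by blast
      then show False by simp
    qed
    then have "f (z+1) > v" using zn zW unfolding W_def by auto
    moreover have "f (z+1) \<le> f z + 1" using step zn zW unfolding W_def by auto
    ultimately have "f z = v" using zW unfolding W_def by auto
    then show ?thesis using zW unfolding W_def by auto
  qed
  have flat: "f x = a \<or> f x = b" if x: "1 \<le> x" "x + 1 \<le> n" "f x = f (x+1)" for x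
  proof (rule ccontr)
    assume "\<not> (f x = a \<or> f x = b)"
    then have y: "a < f x" "f x < b" using frng[of x] x by auto
    define y where "y = f x"
    have "\<exists>z\<in>{1..n}. f z = y - 1" using ivt[of "y-1"] y unfolding y_def by simp
    then obtain z1 where z1: "z1 \<in> {1..n}" "f z1 = y - 1" by blast
    have "\<exists>z\<in>{1..n}. f z = y + 1" using ivt[of "y+1"] y unfolding y_def by simp
    then obtain z2 where z2: "z2 \<in> {1..n}" "f z2 = y + 1" by blast
    define t where "t = \<beta> y"
    define t1 where "t1 = \<beta> (y-1)"
    define t2 where "t2 = \<beta> (y+1)"
    have yr: "y - 1 \<in> {1..n}" "y \<in> {1..n}" "y + 1 \<in> {1..n}" using y a1 bn unfolding y_def by auto
    have ft: "f t = y" using reg[of x] x unfolding t_def y_def by auto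
    have ft1: "f t1 = y - 1" using reg[OF z1(1)] z1 unfolding t1_def by auto
    have ft2: "f t2 = y + 1" using reg[OF z2(1)] z2 unfolding t2_def by auto
    have tr: "t \<in> {1..n}" "t1 \<in> {1..n}" "t2 \<in> {1..n}" using br yr unfolding t_def t1_def t2_def by auto
    have "\<bar>int t1 - int t\<bar> \<le> \<bar>int (y-1) - int y\<bar>" using bc yr unfolding is_contraction_def t_def t1_def by blast
    moreover have "\<bar>int (y-1) - int y\<bar> = 1" using yr by auto
    ultimately have c1: "\<bar>int t1 - int t\<bar> \<le> 1" by simp
    have "\<bar>int t2 - int t\<bar> \<le> \<bar>int (y+1) - int y\<bar>" using bc yr unfolding is_contraction_def t_def t2_def by blast
    then have c2: "\<bar>int t2 - int t\<bar> \<le> 1" by simp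
    have "t1 < t"
    proof (rule ccontr)
      assume "\<not> t1 < t" then have "f t \<le> f t1" using fm[of t t1] tr by auto
      then show False using ft ft1 y unfolding y_def by auto
    qed
    then have t1e: "t1 + 1 = t" using c1 by auto
    have "t < t2"
    proof (rule ccontr)
      assume "\<not> t < t2" then have "f t2 \<le> f t" using fm[of t2 t] tr by auto
      then show False using ft ft2 by auto
    qed
    then have t2e: "t2 = t + 1" using c2 by auto
    show False
    proof (cases "x < t")
      case True
      then have "f x \<le> f t1" using fm[of x t1] x tr t1e by auto
      then show False using ft1 y unfolding y_def by auto
    next
      case False
      then have "f t2 \<le> f (x+1)" using fm[of t2 "x+1"] x tr t2e by auto
      then show False using ft2 x(3) unfolding y_def by auto
    qed
  qed
  define P where "P = {x\<in>{1..n}. f x = a}"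
  have P1: "1 \<in> P" using n1 unfolding P_def a_def by auto
  have Pf: "finite P" unfolding P_def by auto
  define p where "p = Max P"
  have pP: "p \<in> P" using P1 Pf unfolding p_def by (intro Max_in) auto
  have p1: "1 \<le> p" "p \<le> n" "f p = a" using pP unfolding P_def by auto
  have "p \<noteq> n" using p1 ab unfolding b_def by auto
  then have pn: "p < n" using p1 by auto
  have fp1: "f (p+1) \<noteq> a"
  proof
    assume "f (p+1) = a"
    then have "p + 1 \<in> P" using pn unfolding P_def by auto
    then have "p + 1 \<le> p" unfolding p_def using Max_ge[OF Pf] by blast
    then show False by simp
  qed
  have right: "p + k \<le> n \<Longrightarrow> f (p+k) = min b (a + k)" for k
  proof (induction k)
    case 0 then show ?case using p1 ab by auto
  next
    case (Suc k)
    then have IH: "f (p+k) = min b (a+k)" by auto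
    have le: "f (p+k) \<le> f (p+k+1)" "f (p+k+1) \<le> f (p+k) + 1"
      using fm[of "p+k" "p+k+1"] step[of "p+k"] Suc.prems p1 by auto
    have bb: "f (p+k+1) \<le> b" using frng[of "p+k+1"] Suc.prems p1 by auto
    show ?case
    proof (cases "f (p+k) = b")
      case True then show ?thesis using le bb IH by auto
    next
      case False
      then have fk: "f (p+k) = a + k" "a + k < b" using IH by auto
      show ?thesis
      proof (cases k)
        case 0
        then show ?thesis using fp1 le fk by auto
      next
        case (Suc m)
        have "f (p+k) \<noteq> f (p+k+1)" using flat[of "p+k"] fk Suc Suc.prems p1 by auto
        then show ?thesis using le fk by auto
      qed
    qed
  qed
  have left: "f x = a" if "1 \<le> x" "x \<le> p" for x
    using fm[of 1 x] fm[of x p] that p1 unfolding a_def by auto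
  define j where "j = n - (b - a)"
  have fnb: "f n = min b (a + (n - p))" using right[of "n-p"] pn by auto
  have J: "(j,a,p) \<in> SP n"
    using ab a1 bn p1 fnb unfolding SP_def j_def b_def by auto
  have "f x = gP n (j,a,p) x" if x: "x \<in> {1..n}" for x
  proof (cases "x \<le> p")
    case True then show ?thesis using left[of x] x unfolding gP_def by auto
  next
    case False
    then have "f x = min b (a + (x - p))" using right[of "x-p"] x by auto
    then show ?thesis using x False ab bn unfolding gP_def j_def by auto
  qed
  then show ?thesis using J by blast
qed

lemma Tn_ext: "f \<in> Tn n \<Longrightarrow> x \<notin> {1..n} \<Longrightarrow> f x = undefined"
  unfolding Tn_def by (auto simp: PiE_def extensional_def)

lemma Tn_rng: "f \<in> Tn n \<Longrightarrow> x \<in> {1..n} \<Longrightarrow> f x \<in> {1..n}"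
  unfolding Tn_def by auto

lemma Tn_eqI:
  assumes f: "f \<in> Tn n" and g: "g \<in> Tn n" and e: "\<And>x. x \<in> {1..n} \<Longrightarrow> f x = g x"
  shows "f = g"
proof (rule ext)
  fix x
  show "f x = g x"
  proof (cases "x \<in> {1..n}")
    case True then show ?thesis using e by blast
  next
    case False then show ?thesis using Tn_ext[OF f False] Tn_ext[OF g False] by simp
  qed
qed

lemma rv_Tn: "f \<in> Tn n \<Longrightarrow> rv n f \<in> Tn n"
  unfolding rv_def
proof -
  assume f: "f \<in> Tn n"
  show "restrict (\<lambda>x. f (n+1-x)) {1..n} \<in> Tn n" unfolding Tn_def
  proof (rule restrict_PiE_iff[THEN iffD2], rule ballI)
    fix x assume x: "x \<in> {1..n}"
    then have "n+1-x \<in> {1..n}" by auto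
    then show "f (n+1-x) \<in> {1..n}" using Tn_rng[OF f] by blast
  qed
qed

lemma rv_rv: "f \<in> Tn n \<Longrightarrow> rv n (rv n f) = f"
  by (rule Tn_eqI[OF rv_Tn[OF rv_Tn]]) (auto simp: rv_def)

lemma rv_contr: "is_contraction n f \<Longrightarrow> is_contraction n (rv n f)"
proof -
  assume c: "is_contraction n f"
  show ?thesis unfolding is_contraction_def
  proof (intro ballI)
    fix x y assume x: "x \<in> {1..n}" and y: "y \<in> {1..n}"
    have "n+1-x \<in> {1..n}" "n+1-y \<in> {1..n}" using x y by auto
    then have "\<bar>int (f (n+1-x)) - int (f (n+1-y))\<bar> \<le> \<bar>int (n+1-x) - int (n+1-y)\<bar>"
      using c unfolding is_contraction_def by blast
    moreover have "\<bar>int (n+1-x) - int (n+1-y)\<bar> = \<bar>int x - int y\<bar>" using x y by auto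
    ultimately show "\<bar>int (rv n f x) - int (rv n f y)\<bar> \<le> \<bar>int x - int y\<bar>"
      using x y unfolding rv_def by auto
  qed
qed

lemma rv_OP: "order_preserving n f \<Longrightarrow> order_reversing n (rv n f)"
  unfolding order_preserving_def order_reversing_def
proof (intro ballI impI)
  fix x y assume h: "\<forall>x\<in>{1..n}. \<forall>y\<in>{1..n}. x \<le> y \<longrightarrow> f x \<le> f y" and x: "x \<in> {1..n}" and y: "y \<in> {1..n}" and xy: "x \<le> y"
  have "n+1-y \<in> {1..n}" "n+1-x \<in> {1..n}" "n+1-y \<le> n+1-x" using x y xy by auto
  then have "f (n+1-y) \<le> f (n+1-x)" using h by blast
  then show "rv n f y \<le> rv n f x" using x y unfolding rv_def by auto
qed

lemma rv_OR: "order_reversing n f \<Longrightarrow> order_preserving n (rv n f)"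
  unfolding order_preserving_def order_reversing_def
proof (intro ballI impI)
  fix x y assume h: "\<forall>x\<in>{1..n}. \<forall>y\<in>{1..n}. x \<le> y \<longrightarrow> f y \<le> f x" and x: "x \<in> {1..n}" and y: "y \<in> {1..n}" and xy: "x \<le> y"
  have "n+1-y \<in> {1..n}" "n+1-x \<in> {1..n}" "n+1-y \<le> n+1-x" using x y xy by auto
  then have "f (n+1-x) \<le> f (n+1-y)" using h by blast
  then show "rv n f x \<le> rv n f y" using x y unfolding rv_def by auto
qed

lemma rv_ORCT: "f \<in> ORCT n \<Longrightarrow> rv n f \<in> ORCT n"
  unfolding ORCT_def using rv_Tn rv_contr rv_OP rv_OR by blast

definition fl :: "nat \<Rightarrow> (nat \<Rightarrow> nat) \<Rightarrow> (nat \<Rightarrow> nat)" where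
  "fl n f = restrict (\<lambda>y. n + 1 - f y) {1..n}"

lemma fl_ORCT: "f \<in> ORCT n \<Longrightarrow> fl n f \<in> ORCT n"
proof -
  assume f: "f \<in> ORCT n"
  then have T: "f \<in> Tn n" and c: "is_contraction n f" and o: "order_preserving n f \<or> order_reversing n f"
    unfolding ORCT_def by auto
  have fr: "\<forall>x\<in>{1..n}. f x \<in> {1..n}" using Tn_rng[OF T] by blast
  have fr': "1 \<le> f x \<and> f x \<le> n" if "1 \<le> x" "x \<le> n" for x using fr that by auto
  have T': "fl n f \<in> Tn n" unfolding Tn_def fl_def
  proof (rule restrict_PiE_iff[THEN iffD2], rule ballI)
    fix x assume x: "x \<in> {1..n}"
    then have "1 \<le> f x \<and> f x \<le> n" using fr' by auto
    then show "n + 1 - f x \<in> {1..n}" by auto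
  qed
  have c': "is_contraction n (fl n f)" unfolding is_contraction_def
  proof (intro ballI)
    fix x y assume x: "x \<in> {1..n}" and y: "y \<in> {1..n}"
    have r: "f x \<in> {1..n}" "f y \<in> {1..n}" using T x y unfolding Tn_def by auto
    have cc: "\<bar>int (f x) - int (f y)\<bar> \<le> \<bar>int x - int y\<bar>" using c x y unfolding is_contraction_def by blast
    have "int (fl n f x) - int (fl n f y) = -(int (f x) - int (f y))" using r x y unfolding fl_def by auto
    then show "\<bar>int (fl n f x) - int (fl n f y)\<bar> \<le> \<bar>int x - int y\<bar>"
      using cc by (simp only: abs_minus_cancel)
  qed
  have o': "order_preserving n (fl n f) \<or> order_reversing n (fl n f)"
  proof (cases "order_preserving n f")
    case True
    have "order_reversing n (fl n f)" unfolding order_reversing_def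
    proof (intro ballI impI)
      fix x y assume x: "x \<in> {1..n}" and y: "y \<in> {1..n}" and xy: "x \<le> y"
      have "f x \<le> f y" using True x y xy unfolding order_preserving_def by blast
      moreover have "f y \<le> n" using fr y by auto
      ultimately show "fl n f y \<le> fl n f x" using x y unfolding fl_def by auto
    qed
    then show ?thesis by blast
  next
    case False
    then have OR: "order_reversing n f" using o by blast
    have "order_preserving n (fl n f)" unfolding order_preserving_def
    proof (intro ballI impI)
      fix x y assume x: "x \<in> {1..n}" and y: "y \<in> {1..n}" and xy: "x \<le> y"
      have "f y \<le> f x" using OR x y xy unfolding order_reversing_def by blast
      moreover have "f x \<le> n" using fr x by auto
      ultimately show "fl n f x \<le> fl n f y" using x y unfolding fl_def by auto
    qed
    then show ?thesis by blast
  qed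
  show ?thesis unfolding ORCT_def using T' c' o' by auto
qed

lemma rv_Reg: "f \<in> Reg_ORCT n \<Longrightarrow> rv n f \<in> Reg_ORCT n"
proof -
  assume "f \<in> Reg_ORCT n"
  then obtain b where f: "f \<in> ORCT n" and b: "b \<in> ORCT n" and e: "tmul n (tmul n f b) f = f"
    unfolding Reg_ORCT_def by auto
  have fT: "f \<in> Tn n" and bT: "b \<in> Tn n" using f b unfolding ORCT_def by auto
  have pw: "\<forall>x\<in>{1..n}. f (b (f x)) = f x" using reg_iff[OF fT bT] e by blast
  have "\<forall>x\<in>{1..n}. rv n f (fl n b (rv n f x)) = rv n f x"
  proof
    fix x assume x: "x \<in> {1..n}"
    define u where "u = f (n+1-x)"
    have nx: "n+1-x \<in> {1..n}" using x by auto
    then have u: "u \<in> {1..n}" using Tn_rng[OF fT] unfolding u_def by blast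
    have bu: "b u \<in> {1..n}" using Tn_rng[OF bT u] .
    have "rv n f x = u" using x unfolding rv_def u_def by auto
    moreover have "fl n b u = n + 1 - b u" using u unfolding fl_def by auto
    moreover have "rv n f (n + 1 - b u) = f (b u)" using bu unfolding rv_def by auto
    moreover have "f (b u) = u" using pw nx unfolding u_def by blast
    ultimately show "rv n f (fl n b (rv n f x)) = rv n f x" by simp
  qed
  then have "tmul n (tmul n (rv n f) (fl n b)) (rv n f) = rv n f"
    using reg_iff[OF rv_Tn[OF fT], of "fl n b"] fl_ORCT[OF b] unfolding ORCT_def by auto
  then show ?thesis unfolding Reg_ORCT_def using rv_ORCT[OF f] fl_ORCT[OF b] by auto
qed

lemma Reg_OP_in:
  assumes f: "f \<in> Reg_ORCT n" and op: "order_preserving n f" and nc: "f 1 \<noteq> f n" and n1: "1 \<le> n"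
  shows "f \<in> gP n ` SP n"
proof -
  obtain b where fo: "f \<in> ORCT n" and b: "b \<in> ORCT n" and e: "tmul n (tmul n f b) f = f"
    using f unfolding Reg_ORCT_def by auto
  have fT: "f \<in> Tn n" and bT: "b \<in> Tn n" using fo b unfolding ORCT_def by auto
  have pw: "\<And>x. x\<in>{1..n} \<Longrightarrow> f (b (f x)) = f x" using reg_iff[OF fT bT] e by blast
  obtain j a p where J: "(j,a,p) \<in> SP n" and eq: "\<forall>x\<in>{1..n}. f x = gP n (j,a,p) x"
    using key[of n f b] Tn_rng[OF fT] Tn_rng[OF bT] op fo b pw nc n1
    unfolding order_preserving_def ORCT_def by blast
  have "gP n (j,a,p) \<in> Tn n" using gP_mem(1)[OF J] unfolding Reg_ORCT_def ORCT_def by auto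
  then have "f = gP n (j,a,p)" using Tn_eqI[OF fT] eq by blast
  then show ?thesis using J by blast
qed

lemma const_in:
  assumes f: "f \<in> ORCT n" and c: "f 1 = f n" and n1: "1 \<le> n"
  shows "f \<in> Cn n"
proof -
  have fT: "f \<in> Tn n" using f unfolding ORCT_def by blast
  have o: "order_preserving n f \<or> order_reversing n f" using f unfolding ORCT_def by blast
  have 1: "1 \<in> {1..n}" "n \<in> {1..n}" using n1 by auto
  have all: "f x = f 1" if x: "x \<in> {1..n}" for x
  proof -
    have x1: "1 \<le> x" "x \<le> n" using x by auto
    show "f x = f 1"
    proof (cases "order_preserving n f")
      case True
      then have "f 1 \<le> f x" "f x \<le> f n" using x 1 x1 unfolding order_preserving_def by blast+
      then show ?thesis using c by linarith
    next
      case False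
      then have OR: "order_reversing n f" using o by blast
      then have "f x \<le> f 1" "f n \<le> f x" using x 1 x1 unfolding order_reversing_def by blast+
      then show ?thesis using c by linarith
    qed
  qed
  define c0 where "c0 = f 1"
  have f1: "c0 \<in> {1..n}" using Tn_rng[OF fT 1(1)] unfolding c0_def .
  have all': "\<And>x. x \<in> {1..n} \<Longrightarrow> f x = c0" using all unfolding c0_def by blast
  have eq: "f = restrict (\<lambda>_. c0) {1..n}"
  proof (rule Tn_eqI[OF fT])
    show "restrict (\<lambda>_. c0) {1..n} \<in> Tn n" using f1 unfolding Tn_def by simp
  next
    fix x assume "x \<in> {1..n}" then show "f x = restrict (\<lambda>_. c0) {1..n} x" using all' by simp
  qed
  show ?thesis unfolding Cn_def using eq f1 by blast
qed

lemma Cn_Reg: "Cn n \<subseteq> Reg_ORCT n"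
proof
  fix f assume "f \<in> Cn n"
  then obtain c where c: "c \<in> {1..n}" and fe: "f = restrict (\<lambda>_. c) {1..n}" unfolding Cn_def by auto
  have fT: "f \<in> Tn n" using c fe unfolding Tn_def by auto
  have fo: "f \<in> ORCT n" using fT fe unfolding ORCT_def is_contraction_def order_preserving_def by auto
  have "tmul n (tmul n f f) f = f" using reg_iff[OF fT fT] c fe by auto
  then show "f \<in> Reg_ORCT n" unfolding Reg_ORCT_def using fo by auto
qed

lemma sumsq: "6 * (\<Sum>j\<in>{1..m}. j*j) = m*(m+1)*(2*m+1)" for m :: nat
proof (induction m)
  case 0 then show ?case by simp
next
  case (Suc m)
  have "(\<Sum>j\<in>{1..Suc m}. j*j) = (\<Sum>j\<in>{1..m}. j*j) + Suc m * Suc m" by simp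
  then have "6 * (\<Sum>j\<in>{1..Suc m}. j*j) = m*(m+1)*(2*m+1) + 6 * (Suc m * Suc m)"
    using Suc.IH by simp
  then show ?case by (simp add: algebra_simps)
qed

lemma card_SP: "card (SP n) = (\<Sum>j\<in>{1..n-1}. j*j)"
  unfolding SP_def by simp

theorem corollary3:
  fixes n :: nat
  assumes "n \<ge> 1"
  shows "int (card (Reg_ORCT n)) =
           (int n * (int n - 1) * (2 * int n - 1) + 6 * int n) div 3 - int n"
proof -
  have n1: "1 \<le> n" using assms .
  define P where "P = gP n ` SP n"
  define R where "R = rv n ` P"
  have PReg: "P \<subseteq> Reg_ORCT n" unfolding P_def using gP_mem(1) by auto
  have RReg: "R \<subseteq> Reg_ORCT n" unfolding R_def using PReg rv_Reg by auto
  have eqs: "Reg_ORCT n = Cn n \<union> P \<union> R"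
  proof
    show "Cn n \<union> P \<union> R \<subseteq> Reg_ORCT n" using Cn_Reg PReg RReg by auto
  next
    show "Reg_ORCT n \<subseteq> Cn n \<union> P \<union> R"
    proof
      fix f assume f: "f \<in> Reg_ORCT n"
      have fo: "f \<in> ORCT n" using f unfolding Reg_ORCT_def by blast
      have fT: "f \<in> Tn n" using fo unfolding ORCT_def by blast
      show "f \<in> Cn n \<union> P \<union> R"
      proof (cases "f 1 = f n")
        case True then show ?thesis using const_in[OF fo True n1] by blast
      next
        case False
        show ?thesis
        proof (cases "order_preserving n f")
          case True then show ?thesis using Reg_OP_in[OF f True False n1] unfolding P_def by blast
        next
          case op: False
          then have "order_reversing n f" using fo unfolding ORCT_def by blast
          then have "order_preserving n (rv n f)" by (rule rv_OR)
          moreover have "rv n f \<in> Reg_ORCT n" using rv_Reg[OF f] .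
          moreover have "rv n f 1 \<noteq> rv n f n" using False n1 unfolding rv_def by auto
          ultimately have "rv n f \<in> P" using Reg_OP_in n1 unfolding P_def by blast
          then have "rv n (rv n f) \<in> R" unfolding R_def by blast
          then show ?thesis using rv_rv[OF fT] by simp
        qed
      qed
    qed
  qed
  have Pprop: "g 1 < g n" if "g \<in> P" for g
    using that gP_mem(3,4,5) unfolding P_def by auto
  have PT: "P \<subseteq> Tn n" using PReg unfolding Reg_ORCT_def ORCT_def by auto
  have Rprop: "g n < g 1" if gR: "g \<in> R" for g
  proof -
    obtain h where h: "h \<in> P" "g = rv n h" using gR unfolding R_def by blast
    then show ?thesis using Pprop[OF h(1)] n1 unfolding rv_def by auto
  qed
  have Cprop: "g 1 = g n" if "g \<in> Cn n" for g
    using that n1 unfolding Cn_def by auto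
  have finC: "finite (Cn n)" unfolding Cn_def by simp
  have finSP: "finite (SP n)" unfolding SP_def by simp
  have finP: "finite P" unfolding P_def using finSP by simp
  have finR: "finite R" unfolding R_def using finP by simp
  have le: "g 1 \<le> g n" if "g \<in> Cn n \<union> P" for g
    using that Cprop Pprop by (metis Un_iff le_eq_less_or_eq)
  have d1: "Cn n \<inter> P = {}"
  proof -
    { fix g assume "g \<in> Cn n" "g \<in> P"
      then have "g 1 = g n" "g 1 < g n" using Cprop Pprop by blast+
      then have False by linarith }
    then show ?thesis by blast
  qed
  have d2: "(Cn n \<union> P) \<inter> R = {}"
  proof -
    { fix g assume "g \<in> Cn n \<union> P" "g \<in> R"
      then have "g 1 \<le> g n" "g n < g 1" using le Rprop by blast+
      then have False by linarith }
    then show ?thesis by blast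
  qed
  have cC: "card (Cn n) = n"
  proof -
    have "inj_on (\<lambda>c. restrict (\<lambda>_. c) {1..n}) {1..n}"
    proof (rule inj_onI)
      fix x y assume "restrict (\<lambda>_. x) {1..n} = restrict (\<lambda>_::nat. y) {1..n}"
      then have "restrict (\<lambda>_. x) {1..n} 1 = restrict (\<lambda>_::nat. y) {1..n} 1" by simp
      then show "x = y" using n1 by simp
    qed
    then show ?thesis unfolding Cn_def by (simp add: card_image)
  qed
  have cP: "card P = card (SP n)" unfolding P_def using gP_inj by (simp add: card_image)
  have cR: "card R = card P"
  proof -
    have "inj_on (rv n) P"
    proof (rule inj_onI)
      fix x y assume x: "x \<in> P" and y: "y \<in> P" and e: "rv n x = rv n y"
      have "rv n (rv n x) = rv n (rv n y)" using e by simp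
      moreover have "x \<in> Tn n" "y \<in> Tn n" using x y PT by auto
      ultimately show "x = y" using rv_rv by metis
    qed
    then show ?thesis unfolding R_def by (simp add: card_image)
  qed
  define s where "s = (\<Sum>j\<in>{1..n-1}. j*j)"
  have card: "card (Reg_ORCT n) = n + 2 * s"
  proof -
    have "card (Reg_ORCT n) = card (Cn n \<union> P) + card R"
      unfolding eqs using card_Un_disjoint[OF _ finR d2] finC finP by simp
    also have "card (Cn n \<union> P) = card (Cn n) + card P"
      using card_Un_disjoint[OF finC finP d1] .
    finally show ?thesis using cC cP cR card_SP unfolding s_def by simp
  qed
  obtain m where m: "n = Suc m" using n1 by (cases n) auto
  have s6: "6 * s = m * (m+1) * (2*m+1)" using sumsq[of m] m unfolding s_def by simp
  have s6i: "6 * int s = int m * (int m + 1) * (2 * int m + 1)"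
    using arg_cong[OF s6, of int] by (simp add: algebra_simps)
  have "int n * (int n - 1) * (2 * int n - 1) + 6 * int n = 3 * (2 * int s + 2 * int n)"
    using s6i m by (simp add: algebra_simps)
  then have "(int n * (int n - 1) * (2 * int n - 1) + 6 * int n) div 3 = 2 * int s + 2 * int n" by simp
  then show ?thesis using card by simp
qed

end
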